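(* For every two integers $m,n\ge2$ there exists a mapping $h_m^n:\mathbb Z_m^n\to\{0,\ldots,4m\}^{2n}$ such that for every $q\in[2,\infty)$ and every $x,y\in\mathbb Z_m^n$, $$m\Big(\sum_{j=1}^n\big|e^{2\pi ix_j/m}-e^{2\pi iy_j/m}\big|^q\Big)^{1/q}\le\|h_m^n(x)-h_m^n(y)\|_q\le 3m\Big(\sum_{j=1}^n\big|e^{2\pi ix_j/m}-e^{2\pi iy_j/m}\big|^q\Big)^{1/q},$$ where $\|\cdot\|_q$ is the $\ell_q$ norm on $\mathbb R^{2n}$.
   Context: $\mathbb Z_m^n=(\mathbb Z/m\mathbb Z)^n$; the expression $e^{2\pi i x_j/m}$ is well defined for $x_j\in\mathbb Z/m\mathbb Z$. *)

theory Defs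
  imports "HOL-Analysis.Analysis" "HOL-Library.FuncSet"
begin

text \<open>Z_m^n: vectors indexed by {0..<n} (the paper's 1..n) with entries in {0..<m},
  the canonical representatives of Z/mZ; extensional outside the index set.\<close>
definition Zmn :: "nat \<Rightarrow> nat \<Rightarrow> (nat \<Rightarrow> nat) set" where
  "Zmn m n = ({0..<n} \<rightarrow>\<^sub>E {0..<m})"

definition zchar :: "nat \<Rightarrow> nat \<Rightarrow> complex" where
  "zchar m k = exp (2 * pi * \<i> * of_nat k / of_nat m)"

definition lq_norm :: "real \<Rightarrow> nat \<Rightarrow> (nat \<Rightarrow> real) \<Rightarrow> real" where
  "lq_norm q d v = (\<Sum>j<d. \<bar>v j\<bar> powr q) powr (1 / q)"

definition char_dist :: "real \<Rightarrow> nat \<Rightarrow> nat \<Rightarrow> (nat \<Rightarrow> nat) \<Rightarrow> (nat \<Rightarrow> nat) \<Rightarrow> real" where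
  "char_dist q m n x y = (\<Sum>j<n. cmod (zchar m (x j) - zchar m (y j)) powr q) powr (1 / q)"

end

theory Submission
  imports Defs
begin


lemma sin_cubic_lb: assumes "0 \<le> x" shows "x - x^3/6 \<le> sin (x::real)"
proof -
  have "\<bar>sin x - (\<Sum>m<3. sin_coeff m * x ^ m)\<bar> \<le> inverse (fact 3) * \<bar>x\<bar> ^ 3"
    by (rule Maclaurin_sin_bound)
  moreover have "(\<Sum>m<3. sin_coeff m * x ^ m) = x"
    by (simp add: numeral_3_eq_3 sin_coeff_def)
  moreover have "inverse (fact 3 :: real) = 1/6" by (simp add: numeral_3_eq_3)
  ultimately have "\<bar>sin x - x\<bar> \<le> \<bar>x\<bar>^3/6" by simp
  moreover have "\<bar>x\<bar>^3 = x^3" using assms by simp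
  ultimately show ?thesis by linarith
qed
lemma sin_lb:
  fixes m s :: real
  assumes m: "m \<ge> 2" and s1: "pi / m \<le> s" and s2: "s \<le> pi/2"
  shows "5 / (4*m) \<le> sin s"
proof (cases "s \<le> 1")
  case True
  have s0: "0 \<le> s" using s1 m pi_gt_zero by (smt (verit) divide_nonneg_nonneg)
  have "s^3 \<le> s" proof -
    have "s^3 = s * s^2" by (simp add: power3_eq_cube power2_eq_square)
    moreover have "s^2 \<le> 1" using True s0 by (simp add: power_le_one)
    ultimately show ?thesis using s0 by (simp add: mult_left_le)
  qed
  hence "5/6 * s \<le> sin s" using sin_cubic_lb[of s] s0 by linarith
  moreover have "3 / m \<le> s" proof -
    have "3/m \<le> pi/m" using pi_gt3 m by (intro divide_right_mono) auto
    thus ?thesis using s1 by linarith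
  qed
  moreover have "5/(4*m) \<le> 5/6 * (3/m)" using m by (simp add: field_simps)
  ultimately show ?thesis by linarith
next
  case False
  have "sin 1 \<le> sin s" using False s2 by (intro sin_monotone_2pi_le) (use pi_gt3 in auto)
  moreover have "5/6 \<le> sin (1::real)" using sin_cubic_lb[of 1] by simp
  moreover have "5/(4*m) \<le> 5/8" using m by (simp add: field_simps)
  ultimately show ?thesis by linarith
qed


lemma lq_le_l2:
  fixes u w q :: real
  assumes q: "q \<ge> 2" and u: "u \<ge> 0" and w: "w \<ge> 0"
  shows "u powr q + w powr q \<le> sqrt (u^2 + w^2) powr q"
proof (cases "u^2 + w^2 = 0")
  case True
  hence "u = 0" "w = 0" using u w by (auto simp: add_nonneg_eq_0_iff)
  thus ?thesis by simp
next
  case False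
  define s where "s = sqrt (u^2 + w^2)"
  have sp: "s > 0" using False u w unfolding s_def
    by (metis add_nonneg_nonneg real_sqrt_gt_zero zero_le_power2 order_le_less)
  have s2: "s^2 = u^2 + w^2" unfolding s_def by simp
  have us: "u \<le> s" unfolding s_def using u w by (intro real_le_rsqrt) simp
  have ws: "w \<le> s" unfolding s_def using u w by (intro real_le_rsqrt) simp
  have key: "x powr q \<le> s powr q * (x/s)^2" if x0: "0 \<le> x" and xs: "x \<le> s" for x
  proof -
    have "x = s * (x/s)" using sp by simp
    hence "x powr q = s powr q * (x/s) powr q"
      using sp x0 by (metis powr_mult less_imp_le divide_nonneg_pos)
    also have "(x/s) powr q \<le> (x/s) powr 2"
      using q x0 xs sp by (intro powr_mono') (auto simp: divide_le_eq_1)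
    also have "(x/s) powr 2 = (x/s)^2"
      using x0 sp by (simp add: powr_numeral)
    finally show ?thesis using sp by (simp add: mult_left_mono)
  qed
  have "u powr q + w powr q \<le> s powr q * (u/s)^2 + s powr q * (w/s)^2"
    using key[OF u us] key[OF w ws] by linarith
  also have "\<dots> = s powr q * ((u^2 + w^2) / s^2)"
    by (simp add: power_divide add_divide_distrib distrib_left)
  also have "\<dots> = s powr q" using sp by (simp flip: s2)
  finally show ?thesis unfolding s_def .
qed

lemma coord_bound:
  fixes q D al be u w :: real
  assumes q: "q \<ge> 2" and D: "D \<ge> 0" and circ: "al^2 + be^2 = 4 * D^2"
    and u: "u \<ge> 0" and w: "w \<ge> 0"
    and ua: "\<bar>u - \<bar>al\<bar>\<bar> \<le> 1" and wb: "\<bar>w - \<bar>be\<bar>\<bar> \<le> 1"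
    and cases: "(D = 0 \<and> u = 0 \<and> w = 0) \<or> 25/4 \<le> D^2"
  shows "D powr q \<le> u powr q + w powr q \<and> u powr q + w powr q \<le> (3*D) powr q"
  using cases
proof
  assume "D = 0 \<and> u = 0 \<and> w = 0" thus ?thesis by simp
next
  assume D2: "25/4 \<le> D^2"
  have D52: "D \<ge> 5/2" using power2_le_imp_le[of "5/2" D] D2 D by (simp add: power_divide)
  have DD: "5/2 * D \<le> D * D" using D52 D by (intro mult_right_mono) auto
  have sqD: "(D+1)^2 = D*D + 2*D + 1" by (simp add: power2_eq_square algebra_simps)
  have lower: "D \<le> u \<or> D \<le> w"
  proof (cases "al^2 \<ge> 2 * D^2")
    case True
    have "(D+1)^2 \<le> al^2" using True DD sqD D52 unfolding power2_eq_square by linarith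
    hence "(D+1)^2 \<le> \<bar>al\<bar>^2" by simp
    hence "D + 1 \<le> \<bar>al\<bar>" by (rule power2_le_imp_le) simp
    thus ?thesis using ua by linarith
  next
    case False
    hence "be^2 \<ge> 2 * D^2" using circ by linarith
    hence "(D+1)^2 \<le> be^2" using DD sqD D52 unfolding power2_eq_square by linarith
    hence "(D+1)^2 \<le> \<bar>be\<bar>^2" by simp
    hence "D + 1 \<le> \<bar>be\<bar>" by (rule power2_le_imp_le) simp
    thus ?thesis using wb by linarith
  qed
  have "D powr q \<le> u powr q + w powr q"
  proof -
    have pu: "0 \<le> u powr q" "0 \<le> w powr q" by auto
    from lower show ?thesis
    proof
      assume "D \<le> u" hence "D powr q \<le> u powr q" using D q by (intro powr_mono2) auto
      thus ?thesis using pu by linarith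
    next
      assume "D \<le> w" hence "D powr q \<le> w powr q" using D q by (intro powr_mono2) auto
      thus ?thesis using pu by linarith
    qed
  qed
  moreover have "u powr q + w powr q \<le> (3*D) powr q"
  proof -
    have "al^2 \<le> 4*D^2" "be^2 \<le> 4*D^2" using circ zero_le_power2[of al] zero_le_power2[of be] by linarith+
    hence "\<bar>al\<bar>^2 \<le> (2*D)^2" "\<bar>be\<bar>^2 \<le> (2*D)^2" by (simp_all add: power_mult_distrib)
    hence abA: "\<bar>al\<bar> \<le> 2*D" "\<bar>be\<bar> \<le> 2*D" using D by (auto intro: power2_le_imp_le)
    have "u \<le> \<bar>al\<bar> + 1" "w \<le> \<bar>be\<bar> + 1" using ua wb by linarith+
    hence "u^2 + w^2 \<le> (\<bar>al\<bar> + 1)^2 + (\<bar>be\<bar> + 1)^2" using u w by (intro add_mono power_mono) auto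
    also have "\<dots> = al^2 + be^2 + 2*(\<bar>al\<bar> + \<bar>be\<bar>) + 2" by (simp add: power2_eq_square algebra_simps)
    also have "\<dots> \<le> 4*D^2 + 8*D + 2" unfolding circ using abA by simp
    also have "\<dots> \<le> (3*D)^2" using DD D52 unfolding power2_eq_square by linarith
    finally have "sqrt (u^2 + w^2) \<le> 3*D" using D by (simp add: real_sqrt_le_iff real_le_lsqrt)
    hence "sqrt (u^2 + w^2) powr q \<le> (3*D) powr q" using q by (intro powr_mono2) auto
    with lq_le_l2[OF q u w] show ?thesis by linarith
  qed
  ultimately show ?thesis ..
qed


lemma zchar_cis: "zchar m k = cis (2 * pi * real k / real m)"
  by (simp add: zchar_def cis_conv_exp mult_ac)

lemma cmod_cis_diff_sq: "cmod (cis A - cis B)^2 = 4 * sin ((A - B)/2)^2"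
proof -
  have "cmod (cis A - cis B)^2 = (cos A - cos B)^2 + (sin A - sin B)^2"
    by (simp add: cmod_power2)
  also have "\<dots> = 2 - 2 * cos (A - B)"
    by (simp add: cos_diff power2_diff algebra_simps sin_squared_eq)
  also have "cos (A - B) = 1 - 2 * sin ((A-B)/2)^2"
    proof -
    have "A - B = 2 * ((A-B)/2)" by simp
    hence "cos (A - B) = cos (2 * ((A-B)/2))" by (rule arg_cong)
    thus ?thesis by (simp only: cos_double_sin)
  qed
  finally show ?thesis by simp
qed

lemma sin_sq_lb:
  fixes m k :: nat
  assumes m: "m \<ge> 2" and k1: "1 \<le> k" and k2: "k < m"
  shows "(5 / (4*real m))^2 \<le> sin (pi * real k / real m)^2"
proof -
  have mpos: "real m > 0" using m by simp
  have "5 / (4*real m) \<le> sin (pi * real k / real m)"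
  proof (cases "2 * k \<le> m")
    case True
    show ?thesis
    proof (rule sin_lb)
      show "2 \<le> real m" using m by simp
      show "pi / real m \<le> pi * real k / real m" using k1 mpos
        by (simp add: divide_right_mono)
      have "real k / real m \<le> 1/2" using True mpos by (simp add: field_simps)
      hence "pi * (real k / real m) \<le> pi * (1/2)" by (intro mult_left_mono) auto
      thus "pi * real k / real m \<le> pi / 2" by simp
    qed
  next
    case False
    have eq: "pi * real k / real m = pi - pi * real (m - k) / real m"
      using k2 mpos by (simp add: of_nat_diff field_simps)
    have "5 / (4*real m) \<le> sin (pi * real (m - k) / real m)"
    proof (rule sin_lb)
      show "2 \<le> real m" using m by simp
      show "pi / real m \<le> pi * real (m-k) / real m" using k2 mpos
        by (simp add: divide_right_mono)
      have "real (m-k) / real m \<le> 1/2" using False mpos k2 by (simp add: field_simps of_nat_diff)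
      hence "pi * (real (m-k) / real m) \<le> pi * (1/2)" by (intro mult_left_mono) auto
      thus "pi * real (m-k) / real m \<le> pi / 2" by simp
    qed
    thus ?thesis by (simp add: eq)
  qed
  moreover have "0 \<le> 5 / (4*real m)" by simp
  ultimately show ?thesis by (intro power_mono) auto
qed

lemma chord_lb:
  fixes m a b :: nat
  assumes m: "m \<ge> 2" and a: "a < m" and b: "b < m" and ab: "a \<noteq> b"
  shows "25/4 \<le> (real m * cmod (zchar m a - zchar m b))^2"
proof -
  have mpos: "real m > 0" using m by simp
  have "cmod (zchar m a - zchar m b)^2 = 4 * sin (pi * (real a - real b) / real m)^2"
    unfolding zchar_cis cmod_cis_diff_sq
    by (simp add: diff_divide_distrib right_diff_distrib)
  also have "sin (pi * (real a - real b) / real m)^2 = sin (pi * real (if a \<le> b then b - a else a - b) / real m)^2"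
  proof (cases "a \<le> b")
    case True
    have "pi * (real a - real b) / real m = - (pi * real (b - a) / real m)"
      using True by (simp add: of_nat_diff divide_simps) (simp add: algebra_simps)
    thus ?thesis using True by simp
  next
    case False
    thus ?thesis by (simp add: of_nat_diff)
  qed
  finally have eq: "cmod (zchar m a - zchar m b)^2 = 4 * sin (pi * real (if a \<le> b then b - a else a - b) / real m)^2" .
  have "(5 / (4*real m))^2 \<le> sin (pi * real (if a \<le> b then b - a else a - b) / real m)^2"
    using ab a b m by (intro sin_sq_lb) auto
  hence "real m^2 * (4 * (5 / (4*real m))^2) \<le> real m^2 * cmod (zchar m a - zchar m b)^2"
    unfolding eq by (intro mult_left_mono) auto
  moreover have "real m^2 * (4 * (5 / (4*real m))^2) = 25/4" using mpos
    by (simp add: field_simps power2_eq_square)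
  ultimately show ?thesis by (simp add: power_mult_distrib)
qed


definition cx :: "nat \<Rightarrow> nat \<Rightarrow> real" where "cx m k = 2 * real m * cos (2 * pi * real k / real m)"
definition sx :: "nat \<Rightarrow> nat \<Rightarrow> real" where "sx m k = 2 * real m * sin (2 * pi * real k / real m)"
definition gr :: "nat \<Rightarrow> real \<Rightarrow> nat" where "gr m t = nat (round t + 2 * int m)"

lemma gr_props:
  assumes "\<bar>t\<bar> \<le> 2 * real m"
  shows "gr m t \<le> 4 * m" "real (gr m t) = of_int (round t) + 2 * real m"
proof -
  have r: "\<bar>of_int (round t) - t\<bar> \<le> (1/2::real)" by (rule of_int_round_abs_le)
  have "of_int (round t) < 2 * real m + 1" "- 2 * real m - 1 < (of_int (round t) :: real)"
    using r assms by linarith+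
  hence "round t < 2 * int m + 1" "- 2 * int m - 1 < round t" by linarith+
  hence b: "round t \<le> 2 * int m" "- 2 * int m \<le> round t" by linarith+
  thus "gr m t \<le> 4 * m" unfolding gr_def by linarith
  show "real (gr m t) = of_int (round t) + 2 * real m" unfolding gr_def using b by simp
qed

lemma cx_bound: "\<bar>cx m k\<bar> \<le> 2 * real m" "\<bar>sx m k\<bar> \<le> 2 * real m"
  unfolding cx_def sx_def by (simp_all add: abs_mult mult_left_le)

lemma diff_close:
  assumes "\<bar>t\<bar> \<le> 2 * real m" "\<bar>t'\<bar> \<le> 2 * real m"
  shows "\<bar>\<bar>real (gr m t) - real (gr m t')\<bar> - \<bar>t - t'\<bar>\<bar> \<le> 1"
proof -
  have "\<bar>of_int (round t) - t\<bar> \<le> (1/2::real)" "\<bar>of_int (round t') - t'\<bar> \<le> (1/2::real)"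
    by (rule of_int_round_abs_le)+
  thus ?thesis using gr_props(2)[OF assms(1)] gr_props(2)[OF assms(2)] by linarith
qed

lemma circ_eq: "(cx m a - cx m b)^2 + (sx m a - sx m b)^2 = 4 * (real m * cmod (zchar m a - zchar m b))^2"
proof -
  have "cmod (zchar m a - zchar m b)^2 = (cos (2 * pi * real a / real m) - cos (2 * pi * real b / real m))^2
     + (sin (2 * pi * real a / real m) - sin (2 * pi * real b / real m))^2"
    unfolding zchar_cis by (simp add: cmod_power2)
  moreover have "\<And>M x1 y1 z1 w1::real. (2*M*x1 - 2*M*y1)^2 + (2*M*z1 - 2*M*w1)^2 = 4*M^2*((x1-y1)^2+(z1-w1)^2)"
    by (simp add: power2_eq_square algebra_simps)
  ultimately show ?thesis unfolding cx_def sx_def by (simp add: power_mult_distrib)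
qed

lemma coord:
  fixes m a b :: nat and q :: real
  assumes m: "m \<ge> 2" and a: "a < m" and b: "b < m" and q: "q \<ge> 2"
  defines "D \<equiv> real m * cmod (zchar m a - zchar m b)"
  defines "u \<equiv> \<bar>real (gr m (cx m a)) - real (gr m (cx m b))\<bar>"
  defines "w \<equiv> \<bar>real (gr m (sx m a)) - real (gr m (sx m b))\<bar>"
  shows "D powr q \<le> u powr q + w powr q \<and> u powr q + w powr q \<le> (3*D) powr q"
proof (rule coord_bound[OF q _ circ_eq[of m a b, folded D_def]])
  show "0 \<le> D" unfolding D_def by simp
  show "0 \<le> u" "0 \<le> w" unfolding u_def w_def by simp_all
  show "\<bar>u - \<bar>cx m a - cx m b\<bar>\<bar> \<le> 1" unfolding u_def by (intro diff_close cx_bound)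
  show "\<bar>w - \<bar>sx m a - sx m b\<bar>\<bar> \<le> 1" unfolding w_def by (intro diff_close cx_bound)
  show "D = 0 \<and> u = 0 \<and> w = 0 \<or> 25 / 4 \<le> D\<^sup>2"
  proof (cases "a = b")
    case True thus ?thesis unfolding D_def u_def w_def by simp
  next
    case False thus ?thesis unfolding D_def using chord_lb[OF m a b] by simp
  qed
qed


lemma sum_pairs: "(\<Sum>i<2*n. f i) = (\<Sum>j<n. f (2*j) + f (2*j+1))" for f :: "nat \<Rightarrow> real"
  by (induction n) (simp_all add: algebra_simps)

lemma scale_powr_sum:
  fixes c q :: real and f :: "nat \<Rightarrow> real"
  assumes c: "c \<ge> 0" and q: "q > 0" and f: "\<And>j. f j \<ge> 0"
  shows "c * (\<Sum>j<n. f j powr q) powr (1/q) = (\<Sum>j<n. (c * f j) powr q) powr (1/q)"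
proof -
  have "(\<Sum>j<n. (c * f j) powr q) = c powr q * (\<Sum>j<n. f j powr q)"
    using c f by (simp add: powr_mult sum_distrib_left)
  hence "(\<Sum>j<n. (c * f j) powr q) powr (1/q) = (c powr q) powr (1/q) * (\<Sum>j<n. f j powr q) powr (1/q)"
    using c by (simp add: powr_mult sum_nonneg)
  also have "(c powr q) powr (1/q) = c" using c q by (simp add: powr_powr)
  finally show ?thesis by simp
qed

definition hmap :: "nat \<Rightarrow> nat \<Rightarrow> (nat \<Rightarrow> nat) \<Rightarrow> (nat \<Rightarrow> nat)" where
  "hmap m n x = (\<lambda>i. if i < 2*n then (if even i then gr m (cx m (x (i div 2))) else gr m (sx m (x (i div 2)))) else undefined)"

theorem mainTheorem7:
  fixes m n :: nat
  assumes "m \<ge> 2" and "n \<ge> 2"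
  shows "\<exists>h :: (nat \<Rightarrow> nat) \<Rightarrow> (nat \<Rightarrow> nat).
           h \<in> Zmn m n \<rightarrow> ({0..<2 * n} \<rightarrow>\<^sub>E {0..4 * m}) \<and>
           (\<forall>q :: real. q \<ge> 2 \<longrightarrow> (\<forall>x \<in> Zmn m n. \<forall>y \<in> Zmn m n.
              real m * char_dist q m n x y
                \<le> lq_norm q (2 * n) (\<lambda>j. real (h x j) - real (h y j)) \<and>
              lq_norm q (2 * n) (\<lambda>j. real (h x j) - real (h y j))
                \<le> 3 * real m * char_dist q m n x y))"
proof (intro exI[of _ "hmap m n"] conjI allI impI ballI)
  show "hmap m n \<in> Zmn m n \<rightarrow> ({0..<2 * n} \<rightarrow>\<^sub>E {0..4 * m})"
    by (auto simp: hmap_def PiE_def extensional_def gr_props(1) cx_bound)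
  fix q :: real and x y
  assume q: "2 \<le> q" and x: "x \<in> Zmn m n" and y: "y \<in> Zmn m n"
  have xj: "x j < m" "y j < m" if "j < n" for j using x y that by (auto simp: Zmn_def PiE_def Pi_def)
  define D where "D j = real m * cmod (zchar m (x j) - zchar m (y j))" for j
  define T where "T j = \<bar>real (gr m (cx m (x j))) - real (gr m (cx m (y j)))\<bar> powr q
       + \<bar>real (gr m (sx m (x j))) - real (gr m (sx m (y j)))\<bar> powr q" for j
  have co: "D j powr q \<le> T j \<and> T j \<le> (3 * D j) powr q" if "j < n" for j
    unfolding D_def T_def using coord[OF assms(1) xj[OF that] q] by simp
  have lq: "lq_norm q (2 * n) (\<lambda>j. real (hmap m n x j) - real (hmap m n y j)) = (\<Sum>j<n. T j) powr (1/q)"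
  proof -
    have "(\<Sum>i<2*n. \<bar>real (hmap m n x i) - real (hmap m n y i)\<bar> powr q)
        = (\<Sum>j<n. \<bar>real (hmap m n x (2*j)) - real (hmap m n y (2*j))\<bar> powr q
              + \<bar>real (hmap m n x (2*j+1)) - real (hmap m n y (2*j+1))\<bar> powr q)"
      by (rule sum_pairs)
    also have "\<dots> = (\<Sum>j<n. T j)"
      by (intro sum.cong refl) (simp add: hmap_def T_def)
    finally show ?thesis unfolding lq_norm_def by simp
  qed
  have qp: "q > 0" using q by simp
  have cd1: "real m * char_dist q m n x y = (\<Sum>j<n. D j powr q) powr (1/q)"
    unfolding char_dist_def D_def by (rule scale_powr_sum) (use qp in auto)
  have cd3: "3 * real m * char_dist q m n x y = (\<Sum>j<n. (3 * D j) powr q) powr (1/q)"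
  proof -
    have "3 * real m * char_dist q m n x y = 3 * (\<Sum>j<n. D j powr q) powr (1/q)" using cd1 by simp
    also have "\<dots> = (\<Sum>j<n. (3 * D j) powr q) powr (1/q)"
      by (rule scale_powr_sum) (use qp in \<open>auto simp: D_def\<close>)
    finally show ?thesis .
  qed
  have "(\<Sum>j<n. D j powr q) \<le> (\<Sum>j<n. T j)" using co by (intro sum_mono) auto
  hence "(\<Sum>j<n. D j powr q) powr (1/q) \<le> (\<Sum>j<n. T j) powr (1/q)"
    using qp by (intro powr_mono2) (auto intro: sum_nonneg)
  thus "real m * char_dist q m n x y
                \<le> lq_norm q (2 * n) (\<lambda>j. real (hmap m n x j) - real (hmap m n y j))"
    using cd1 lq by simp
  have "(\<Sum>j<n. T j) \<le> (\<Sum>j<n. (3 * D j) powr q)" using co by (intro sum_mono) auto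
  hence "(\<Sum>j<n. T j) powr (1/q) \<le> (\<Sum>j<n. (3 * D j) powr q) powr (1/q)"
    using qp by (intro powr_mono2) (auto intro: sum_nonneg simp: T_def)
  thus "lq_norm q (2 * n) (\<lambda>j. real (hmap m n x j) - real (hmap m n y j))
                \<le> 3 * real m * char_dist q m n x y"
    using cd3 lq by simp
qed

end
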